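(* Let $\Gamma$ be an open graph with a fixed linear ordering of its terminal edges and weights $\mathbf A=(A_e)$, and let $S_\Gamma(\mathbf A,\boldsymbol\xi)$ be its generating partition function. Let $i$ and $j$ be terminal edges with $j$ immediately following $i$ in the ordering, with weights $A_i,A_j$, and let $\Gamma'$ be the graph obtained by identifying the terminal vertices of $i$ and $j$ and erasing the resulting two-valent vertex, so that $i,j$ become a single edge $e$ with weight $A_e=A_iA_j$. Let $\mathbf A'$ be the resulting weights and $\boldsymbol\xi'$ be $\boldsymbol\xi$ with $\xi_i,\xi_j$ removed. Then $$S_{\Gamma'}(\mathbf A',\boldsymbol\xi')=\int S_\Gamma(\mathbf A,\boldsymbol\xi)\,e^{\xi_i\xi_j}\,d\xi_j\,d\xi_i .$$
   Context: An open graph is a graph with some terminal edges, each having a univalent terminal vertex; other vertices are internal. A dimer configuration on an open graph is a set of edges containing every internal vertex exactly once (no condition on terminal vertices). For a subset $T$ of the set $\mathcal T_\Gamma$ of terminal edges, $S_\Gamma(\mathbf A,T)=\sum_D\prod_{e\in D}A_e$, summed over dimer configurations $D$ in which exactly the terminal edges of $T$ are occupied. With odd (Grassmann) variables $\xi_t$, $t\in\mathcal T_\Gamma$, the generating partition function is $S_\Gamma(\mathbf A,\boldsymbol\xi)=\sum_{T\subset\mathcal T_\Gamma}S_\Gamma(\mathbf A,T)\prod_{t\in T}\xi_t$, products taken in the fixed order. Berezin integration with $\int\xi_i\xi_j\,d\xi_j\,d\xi_i=1$. *)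

theory Defs
  imports Main
begin

text \<open>An open graph is given by a vertex set V, an edge set E, an endpoint map
  ends (each edge e has the two endpoints fst (ends e) and snd (ends e); loops and
  multiple edges are allowed), and a set Term of terminal edges.  For a terminal
  edge t, its terminal vertex is snd (ends t), which must be univalent.\<close>

definition inc :: "('e \<Rightarrow> 'v \<times> 'v) \<Rightarrow> 'e \<Rightarrow> 'v \<Rightarrow> nat" where
  "inc ends e v = (if fst (ends e) = v then 1 else 0) + (if snd (ends e) = v then 1 else 0)"

definition deg :: "'e set \<Rightarrow> ('e \<Rightarrow> 'v \<times> 'v) \<Rightarrow> 'v \<Rightarrow> nat" where
  "deg E ends v = (\<Sum>e\<in>E. inc ends e v)"

definition term_vertices :: "('e \<Rightarrow> 'v \<times> 'v) \<Rightarrow> 'e set \<Rightarrow> 'v set" where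
  "term_vertices ends Term = (\<lambda>t. snd (ends t)) ` Term"

definition open_graph :: "'v set \<Rightarrow> 'e set \<Rightarrow> ('e \<Rightarrow> 'v \<times> 'v) \<Rightarrow> 'e set \<Rightarrow> bool" where
  "open_graph V E ends Term \<longleftrightarrow>
     finite V \<and> finite E \<and>
     (\<forall>e\<in>E. fst (ends e) \<in> V \<and> snd (ends e) \<in> V) \<and>
     Term \<subseteq> E \<and>
     (\<forall>t\<in>Term. deg E ends (snd (ends t)) = 1)"

text \<open>A dimer configuration: a set of edges covering every internal vertex exactly once
  (incidences counted with multiplicity); no condition at terminal vertices.\<close>

definition dimer_config :: "'v set \<Rightarrow> 'e set \<Rightarrow> ('e \<Rightarrow> 'v \<times> 'v) \<Rightarrow> 'e set \<Rightarrow> 'e set \<Rightarrow> bool" where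
  "dimer_config V E ends Term D \<longleftrightarrow>
     D \<subseteq> E \<and> (\<forall>v \<in> V - term_vertices ends Term. (\<Sum>e\<in>D. inc ends e v) = 1)"

definition S_part :: "'v set \<Rightarrow> 'e set \<Rightarrow> ('e \<Rightarrow> 'v \<times> 'v) \<Rightarrow> 'e set \<Rightarrow> ('e \<Rightarrow> 'a::comm_ring_1)
     \<Rightarrow> 'e set \<Rightarrow> 'a" where
  "S_part V E ends Term A T =
     (\<Sum>D\<in>{D. dimer_config V E ends Term D \<and> D \<inter> Term = T}. \<Prod>e\<in>D. A e)"

text \<open>An element of the Grassmann algebra with odd generators xi_t (t of a linearly ordered
  type 'e) is represented by its coefficient function: F T is the coefficient of the
  ordered monomial xi_{t1} ... xi_{tk}, t1 < ... < tk, T = {t1,...,tk}.\<close>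

type_synonym ('e, 'a) grass = "'e set \<Rightarrow> 'a"

definition gsign :: "'e::linorder set \<Rightarrow> 'e set \<Rightarrow> 'a::comm_ring_1" where
  "gsign S T = (-1) ^ card {(s, t). s \<in> S \<and> t \<in> T \<and> t < s}"

definition gmul :: "('e::linorder, 'a::comm_ring_1) grass \<Rightarrow> ('e, 'a) grass \<Rightarrow> ('e, 'a) grass" where
  "gmul F G = (\<lambda>U. \<Sum>S\<in>Pow U. gsign S (U - S) * F S * G (U - S))"

definition gadd :: "('e, 'a::comm_ring_1) grass \<Rightarrow> ('e, 'a) grass \<Rightarrow> ('e, 'a) grass" where
  "gadd F G = (\<lambda>U. F U + G U)"

definition gone :: "('e, 'a::comm_ring_1) grass" where
  "gone = (\<lambda>U. if U = {} then 1 else 0)"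

definition gvar :: "'e \<Rightarrow> ('e, 'a::comm_ring_1) grass" where
  "gvar x = (\<lambda>U. if U = {x} then 1 else 0)"

text \<open>exp(xi_i xi_j) = 1 + xi_i xi_j, since (xi_i xi_j)^2 = 0.\<close>

definition gexp_pair :: "'e::linorder \<Rightarrow> 'e \<Rightarrow> ('e, 'a::comm_ring_1) grass" where
  "gexp_pair i j = gadd gone (gmul (gvar i) (gvar j))"

text \<open>Berezin integration in one variable x, normalised by integral of xi_x d xi_x = 1,
  acting from the right:  integral xi_W dxi_x = (-1)^#{t in W. t > x} xi_{W - {x}} if x in W, else 0.\<close>

definition berezin :: "'e::linorder \<Rightarrow> ('e, 'a::comm_ring_1) grass \<Rightarrow> ('e, 'a) grass" where
  "berezin x F = (\<lambda>U. if x \<in> U then 0 else (-1) ^ card {t\<in>U. x < t} * F (insert x U))"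

text \<open>Iterated integral  \<integral> F dxi_j dxi_i  (inner integration over xi_j); with this
  convention \<integral> xi_i xi_j dxi_j dxi_i = 1.\<close>

definition berezin2 :: "('e::linorder, 'a::comm_ring_1) grass \<Rightarrow> 'e \<Rightarrow> 'e \<Rightarrow> ('e, 'a) grass" where
  "berezin2 F j i = berezin i (berezin j F)"

definition S_gen :: "'v set \<Rightarrow> 'e::linorder set \<Rightarrow> ('e \<Rightarrow> 'v \<times> 'v) \<Rightarrow> 'e set
     \<Rightarrow> ('e \<Rightarrow> 'a::comm_ring_1) \<Rightarrow> ('e, 'a) grass" where
  "S_gen V E ends Term A = (\<lambda>T. if T \<subseteq> Term then S_part V E ends Term A T else 0)"

end

theory Submission imports Defs begin

lemma gvv: fixes i j :: "'e::linorder" assumes "i < j"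
  shows "(gmul (gvar i) (gvar j) :: ('e,'a::comm_ring_1) grass) X = (if X = {i,j} then 1 else 0)"
proof (cases "X = {i,j}")
  case True
  have "gmul (gvar i) (gvar j) X = (\<Sum>S\<in>Pow X. if S = {i} then (1::'a) else 0)"
    unfolding gmul_def
  proof (rule sum.cong)
    fix S assume "S \<in> Pow X"
    show "gsign S (X - S) * gvar i S * gvar j (X - S) = (if S = {i} then (1::'a) else 0)"
    proof (cases "S = {i}")
      case True2: True
      have "X - S = {j}" using True True2 assms by auto
      moreover have "{(s, t). s \<in> {i} \<and> t \<in> {j} \<and> t < s} = {}" using assms by auto
      ultimately show ?thesis using True2 unfolding gsign_def by (simp only:) (simp add: gvar_def)
    qed (simp add: gvar_def)
  qed simp
  also have "\<dots> = 1" using True by simp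
  finally show ?thesis using True by simp
next
  case False
  have "gmul (gvar i) (gvar j) X = (\<Sum>S\<in>Pow X. (0::'a))"
    unfolding gmul_def
  proof (rule sum.cong)
    fix S assume "S \<in> Pow X"
    then show "gsign S (X - S) * gvar i S * gvar j (X - S) = (0::'a)"
      using False by (auto simp: gvar_def)
  qed simp
  then show ?thesis using False by simp
qed

lemma gexp: fixes i j :: "'e::linorder" assumes "i < j"
  shows "(gexp_pair i j :: ('e,'a::comm_ring_1) grass) X = (if X = {} then 1 else 0) + (if X = {i,j} then 1 else 0)"
  by (simp add: gvv[OF assms] gexp_pair_def gadd_def gone_def)

lemma gmulG: fixes i j :: "'e::linorder" and F :: "('e,'a::comm_ring_1) grass"
  assumes "i < j" "finite U" "i \<notin> U" "j \<notin> U"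
  shows "gmul F (gexp_pair i j) (insert j (insert i U)) = F (insert j (insert i U)) + gsign U {i,j} * F U"
proof -
  let ?W = "insert j (insert i U)"
  have "gmul F (gexp_pair i j) ?W = (\<Sum>S\<in>Pow ?W. (if S = ?W then F ?W else 0) + (if S = U then gsign U {i,j} * F U else 0))"
    unfolding gmul_def
  proof (rule sum.cong)
    fix S assume S: "S \<in> Pow ?W"
    have e1: "(?W - S = {}) = (S = ?W)" using S by auto
    have e2: "(?W - S = {i,j}) = (S = U)" using S assms by auto
    have "?W - U = {i,j}" using assms by auto
    then show "gsign S (?W - S) * F S * gexp_pair i j (?W - S) = (if S = ?W then F ?W else 0) + (if S = U then gsign U {i,j} * F U else 0)"
    proof -
      have g0: "gsign ?W {} = (1::'a)" by (simp add: gsign_def)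
      show ?thesis
      proof (cases "S = ?W")
        case True
        moreover have "?W \<noteq> U" using assms by auto
        ultimately show ?thesis using assms g0 by (simp add: gexp[OF assms(1)])
      next
        case False
        then show ?thesis using S assms e2 \<open>?W - U = {i,j}\<close> by (simp add: gexp[OF assms(1)], blast)
      qed
    qed
  qed simp
  also have "\<dots> = F ?W + gsign U {i,j} * F U"
    using assms by (simp add: sum.distrib subset_insertI2)
  finally show ?thesis .
qed

lemma gsign_pair: fixes i j :: "'e::linorder"
  assumes "i < j" "finite U" "\<forall>t\<in>U. \<not>(i < t \<and> t < j)" "j \<notin> U"
  shows "(gsign U {i,j} :: 'a::comm_ring_1) = 1"
proof -
  let ?C = "{s\<in>U. i < s}"
  have "{(s, t). s \<in> U \<and> t \<in> {i,j} \<and> t < s} = ?C \<times> {i} \<union> ?C \<times> {j}"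
    using assms by auto (metis neq_iff)+
  moreover have "card (?C \<times> {i} \<union> ?C \<times> {j}) = 2 * card ?C"
    using assms by (subst card_Un_disjoint) (auto simp: card_cartesian_product)
  ultimately show ?thesis by (simp add: gsign_def power_mult)
qed

lemma comb:
  fixes V :: "'v set" and E :: "'e set" and ends :: "'e \<Rightarrow> 'v \<times> 'v"
    and Term :: "'e set" and A :: "'e \<Rightarrow> 'a::comm_ring_1" and i j e :: 'e
  assumes fin: "finite E" and TE: "Term \<subseteq> E" and iT: "i \<in> Term" and jT: "j \<in> Term"
    and ij: "i \<noteq> j" and eE: "e \<notin> E - {i, j}" and UT: "U \<subseteq> Term - {i,j}"
  shows "S_part (V - {snd (ends i), snd (ends j)}) ((E - {i, j}) \<union> {e})
            (ends(e := (fst (ends i), fst (ends j)))) (Term - {i, j}) (A(e := A i * A j)) U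
     = S_part V E ends Term A U + S_part V E ends Term A (insert j (insert i U))"
proof -
  let ?V' = "V - {snd (ends i), snd (ends j)}"
  let ?E' = "(E - {i, j}) \<union> {e}"
  let ?en = "ends(e := (fst (ends i), fst (ends j)))"
  let ?T' = "Term - {i, j}"
  let ?A' = "A(e := A i * A j)"
  let ?I = "V - term_vertices ends Term"
  have eT: "e \<notin> ?T'" using eE TE by auto
  have Ieq: "?V' - term_vertices ?en ?T' = ?I"
  proof -
    have "term_vertices ?en ?T' = term_vertices ends ?T'"
      unfolding term_vertices_def using eT by (intro image_cong) auto
    moreover have "term_vertices ends Term = {snd (ends i), snd (ends j)} \<union> term_vertices ends ?T'"
      unfolding term_vertices_def using iT jT by auto
    ultimately show ?thesis by auto
  qed
  have sndI: "snd (ends i) \<notin> ?I" "snd (ends j) \<notin> ?I"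
    using iT jT unfolding term_vertices_def by auto
  have sumR: "(\<Sum>x\<in>R. inc ?en x v) = (\<Sum>x\<in>R. inc ends x v)" if "e \<notin> R" for R v
    using that by (intro sum.cong) (auto simp: inc_def)
  have ince: "inc ?en e v = inc ends i v + inc ends j v" if "v \<in> ?I" for v
    using that sndI by (auto simp: inc_def)
  let ?X = "{D. dimer_config ?V' ?E' ?en ?T' D \<and> D \<inter> ?T' = U}"
  let ?X1 = "{D\<in>?X. e \<in> D}"
  let ?X2 = "{D\<in>?X. e \<notin> D}"
  let ?Y1 = "{D. dimer_config V E ends Term D \<and> D \<inter> Term = insert j (insert i U)}"
  let ?Y2 = "{D. dimer_config V E ends Term D \<and> D \<inter> Term = U}"
  have finX: "finite ?X"
    by (rule finite_subset[of _ "Pow ?E'"]) (auto simp: dimer_config_def fin)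
  have "S_part ?V' ?E' ?en ?T' ?A' U = (\<Sum>D\<in>?X1 \<union> ?X2. \<Prod>x\<in>D. ?A' x)"
    unfolding S_part_def by (rule sum.cong) auto
  also have "\<dots> = (\<Sum>D\<in>?X1. \<Prod>x\<in>D. ?A' x) + (\<Sum>D\<in>?X2. \<Prod>x\<in>D. ?A' x)"
    by (rule sum.union_disjoint) (auto intro: finite_subset[OF _ finX])
  also have "(\<Sum>D\<in>?X2. \<Prod>x\<in>D. ?A' x) = S_part V E ends Term A U"
    unfolding S_part_def
  proof (rule sum.cong)
    show "?X2 = ?Y2"
    proof (intro set_eqI iffI)
      fix D assume D: "D \<in> ?X2"
      then have DE: "D \<subseteq> E - {i,j}" "e \<notin> D" "D \<inter> ?T' = U"
        by (auto simp: dimer_config_def)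
      have "D \<inter> Term = U" using DE by auto
      moreover have "\<forall>v\<in>?I. (\<Sum>x\<in>D. inc ends x v) = 1"
        using D Ieq sumR[OF DE(2)] by (auto simp: dimer_config_def)
      ultimately show "D \<in> ?Y2" using DE by (auto simp: dimer_config_def)
    next
      fix D assume D: "D \<in> ?Y2"
      then have DE: "D \<subseteq> E - {i,j}" "D \<inter> Term = U"
        using UT iT jT by (auto simp: dimer_config_def)
      then have eD: "e \<notin> D" using eE by auto
      have "D \<inter> ?T' = U" using DE by auto
      moreover have "\<forall>v\<in>?V' - term_vertices ?en ?T'. (\<Sum>x\<in>D. inc ?en x v) = 1"
        using D Ieq sumR[OF eD] by (auto simp: dimer_config_def)
      ultimately show "D \<in> ?X2" using DE eD by (auto simp: dimer_config_def)
    qed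
  next
    fix D assume D: "D \<in> ?Y2"
    then have "D \<subseteq> E - {i,j}"
      using UT iT jT by (auto simp: dimer_config_def)
    then have "e \<notin> D" using eE by auto
    then show "(\<Prod>x\<in>D. ?A' x) = (\<Prod>x\<in>D. A x)"
      by (intro prod.cong) auto
  qed
  also have "(\<Sum>D\<in>?X1. \<Prod>x\<in>D. ?A' x) = S_part V E ends Term A (insert j (insert i U))"
    unfolding S_part_def
  proof (rule sum.reindex_bij_witness[where i="\<lambda>D. insert e (D - {i,j})" and j="\<lambda>D. insert i (insert j (D - {e}))"])
    fix D assume D: "D \<in> ?X1"
    then have DE: "D \<subseteq> E - {i,j} \<union> {e}" "e \<in> D" "D \<inter> ?T' = U"
      by (auto simp: dimer_config_def)
    show "insert e (insert i (insert j (D - {e})) - {i, j}) = D"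
      using DE eE by auto
    let ?R = "D - {e}"
    have Rs: "?R \<subseteq> E - {i,j}" "e \<notin> ?R" using DE eE by auto
    have finR: "finite ?R" using Rs(1) fin by (meson finite_Diff finite_subset)
    have ijR: "i \<notin> ?R" "j \<notin> ?R" using Rs by auto
    let ?D = "insert i (insert j ?R)"
    have "?D \<subseteq> E" using Rs iT jT TE by auto
    moreover have "?D \<inter> Term = insert j (insert i U)" using DE Rs iT jT eT by auto
    moreover have "(\<Sum>x\<in>?D. inc ends x v) = 1" if v: "v \<in> ?I" for v
    proof -
      have "(\<Sum>x\<in>D. inc ?en x v) = 1" using D Ieq v by (auto simp: dimer_config_def)
      moreover have "(\<Sum>x\<in>D. inc ?en x v) = inc ?en e v + (\<Sum>x\<in>?R. inc ?en x v)"
        using sum.insert[OF finR Rs(2), of "\<lambda>x. inc ?en x v"] DE(2) by (simp add: insert_absorb)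
      ultimately have "inc ?en e v + (\<Sum>x\<in>?R. inc ?en x v) = 1" by simp
      then have "inc ends i v + inc ends j v + (\<Sum>x\<in>?R. inc ends x v) = 1"
        using ince[OF v] sumR[OF Rs(2)] by simp
      moreover have "(\<Sum>x\<in>?D. inc ends x v) = inc ends i v + (inc ends j v + (\<Sum>x\<in>?R. inc ends x v))"
        using finR ijR ij by (simp add: sum.insert)
      ultimately show ?thesis by simp
    qed
    ultimately show "?D \<in> ?Y1" by (auto simp: dimer_config_def)
    have "(\<Prod>x\<in>D. ?A' x) = ?A' e * (\<Prod>x\<in>?R. ?A' x)"
      using prod.insert[OF finR Rs(2), of ?A'] DE(2) by (simp add: insert_absorb)
    also have "(\<Prod>x\<in>?R. ?A' x) = (\<Prod>x\<in>?R. A x)"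
      using Rs by (intro prod.cong) auto
    also have "(\<Prod>x\<in>?D. A x) = A i * (A j * (\<Prod>x\<in>?R. A x))"
      using finR ijR ij by (simp add: prod.insert)
    ultimately show "(\<Prod>x\<in>?D. A x) = (\<Prod>x\<in>D. ?A' x)" by (simp add: mult.assoc)
  next
    fix D assume D: "D \<in> ?Y1"
    then have DE: "D \<subseteq> E" "D \<inter> Term = insert j (insert i U)"
      by (auto simp: dimer_config_def)
    have ijD: "i \<in> D" "j \<in> D" using DE by auto
    show "insert i (insert j (insert e (D - {i, j}) - {e})) = D"
      using DE eE ijD by auto
    let ?R = "D - {i,j}"
    have Rs: "?R \<subseteq> E - {i,j}" "e \<notin> ?R" using DE eE by auto
    have finR: "finite ?R" using Rs(1) fin by (meson finite_Diff finite_subset)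
    have ijR: "i \<notin> ?R" "j \<notin> ?R" using Rs by auto
    let ?D = "insert e ?R"
    have "?D \<subseteq> ?E'" using Rs by auto
    moreover have "?D \<inter> ?T' = U" using DE Rs eT UT by auto
    moreover have "(\<Sum>x\<in>?D. inc ?en x v) = 1" if v: "v \<in> ?I" for v
    proof -
      have "(\<Sum>x\<in>D. inc ends x v) = 1" using D v by (auto simp: dimer_config_def)
      moreover have "insert i (insert j ?R) = D" using ijD by auto
      moreover have "(\<Sum>x\<in>insert i (insert j ?R). inc ends x v) = inc ends i v + (inc ends j v + (\<Sum>x\<in>?R. inc ends x v))"
        using finR ijR ij by simp
      ultimately have "inc ends i v + (inc ends j v + (\<Sum>x\<in>?R. inc ends x v)) = 1" by simp
      moreover have "(\<Sum>x\<in>?D. inc ?en x v) = inc ?en e v + (\<Sum>x\<in>?R. inc ?en x v)"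
        using finR Rs by (simp add: sum.insert)
      ultimately show ?thesis using ince[OF v] sumR[OF Rs(2)] by simp
    qed
    ultimately show "?D \<in> ?X1" using Ieq by (auto simp: dimer_config_def)
  qed
  finally show ?thesis by (metis add.commute)
qed

theorem lemma1:
  fixes V :: "'v set" and E :: "'e::linorder set" and ends :: "'e \<Rightarrow> 'v \<times> 'v"
    and Term :: "'e set" and A :: "'e \<Rightarrow> 'a::comm_ring_1" and i j e :: 'e
  assumes "open_graph V E ends Term"
    and "i \<in> Term" and "j \<in> Term" and "i < j"
    and "\<not> (\<exists>t\<in>Term. i < t \<and> t < j)"
    and "e \<notin> E - {i, j}"
  shows "S_gen (V - {snd (ends i), snd (ends j)}) ((E - {i, j}) \<union> {e})
            (ends(e := (fst (ends i), fst (ends j)))) (Term - {i, j}) (A(e := A i * A j))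
         = berezin2 (gmul (S_gen V E ends Term A) (gexp_pair i j)) j i"
proof (rule ext)
  fix U
  have fin: "finite E" and TE: "Term \<subseteq> E" using assms(1) by (auto simp: open_graph_def)
  have ij: "i \<noteq> j" using assms(4) by simp
  let ?F = "S_gen V E ends Term A"
  let ?W = "insert j (insert i U)"
  have R: "berezin2 (gmul ?F (gexp_pair i j)) j i U =
     (if i \<in> U \<or> j \<in> U then 0 else
       (-1) ^ card {t\<in>U. i < t} * ((-1) ^ card {t\<in>insert i U. j < t} * gmul ?F (gexp_pair i j) ?W))"
    using ij by (simp add: berezin2_def berezin_def)
  show "S_gen (V - {snd (ends i), snd (ends j)}) ((E - {i, j}) \<union> {e})
            (ends(e := (fst (ends i), fst (ends j)))) (Term - {i, j}) (A(e := A i * A j)) U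
       = berezin2 (gmul ?F (gexp_pair i j)) j i U"
  proof (cases "U \<subseteq> Term - {i,j}")
    case True
    have finU: "finite U" using True TE fin by (meson finite_subset Diff_subset subset_trans)
    have ijU: "i \<notin> U" "j \<notin> U" using True by auto
    have nb: "\<forall>t\<in>U. \<not>(i < t \<and> t < j)" using True assms(5) by auto
    have ceq: "{t\<in>insert i U. j < t} = {t\<in>U. i < t}"
    proof (intro set_eqI iffI)
      fix t assume "t \<in> {t\<in>insert i U. j < t}" then show "t \<in> {t\<in>U. i < t}"
        using assms(4) by auto
    next
      fix t assume t: "t \<in> {t\<in>U. i < t}"
      then have "t \<noteq> j" using ijU by auto
      then show "t \<in> {t\<in>insert i U. j < t}" using t nb by auto
    qed
    have sq: "((-1::'a) ^ n) * ((-1) ^ n) = 1" for n :: nat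
      by (simp add: power_mult_distrib[symmetric])
    have "berezin2 (gmul ?F (gexp_pair i j)) j i U = gmul ?F (gexp_pair i j) ?W"
    proof -
      have "berezin2 (gmul ?F (gexp_pair i j)) j i U = (-1) ^ card {t\<in>U. i < t} * ((-1) ^ card {t\<in>U. i < t} * gmul ?F (gexp_pair i j) ?W)"
        using R ijU ceq by simp
      also have "\<dots> = gmul ?F (gexp_pair i j) ?W"
        by (simp only: mult.assoc[symmetric] sq mult_1)
      finally show ?thesis .
    qed
    also have "\<dots> = ?F ?W + ?F U"
      using gmulG[OF assms(4) finU ijU, where F="?F"] gsign_pair[OF assms(4) finU nb ijU(2), where 'a='a] by simp
    also have "\<dots> = S_part V E ends Term A ?W + S_part V E ends Term A U"
      using True assms(2,3) by (auto simp: S_gen_def)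
    finally show ?thesis
      using comb[OF fin TE assms(2,3) ij assms(6) True, where V=V and A=A and ends=ends] True
      by (simp add: S_gen_def add.commute)
  next
    case False
    have "berezin2 (gmul ?F (gexp_pair i j)) j i U = 0"
    proof (cases "i \<in> U \<or> j \<in> U")
      case True then show ?thesis using R by simp
    next
      case ijU: False
      have "gmul ?F (gexp_pair i j) ?W = 0"
      proof (cases "finite U")
        case True
        have "\<not> ?W \<subseteq> Term" "\<not> U \<subseteq> Term" using False ijU by auto
        then show ?thesis using gmulG[OF assms(4) True, where F="?F"] ijU by (simp add: S_gen_def)
      next
        case False
        then have "infinite (Pow ?W)" by simp
        then show ?thesis by (simp add: gmul_def)
      qed
      then show ?thesis using R by simp
    qed
    moreover have "\<not> U \<subseteq> Term - {i,j}" using False by simp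
    ultimately show ?thesis by (simp add: S_gen_def)
  qed
qed

end
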